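(* Let $\gamma>0$, $R>0$ and $j\in\mathbb{N}$. Suppose $w\in\mathbb{C}_+$ satisfies $w=G_{j,R}(w)$, where $$G_{j,R}(w):=\frac{-B_j(w)+iA(w)}{2R},\quad A(w):=\log\left|\frac{\mathrm{sq}_-(w^2+i\gamma)-w}{\mathrm{sq}_-(w^2+i\gamma)+w}\right|,\quad B_j(w):=\arg_-\!\left(\frac{\mathrm{sq}_-(w^2+i\gamma)-w}{\mathrm{sq}_-(w^2+i\gamma)+w}\right)+2\pi j,$$ and suppose $w^2+i\gamma\in\mathbb{C}_+$. Then $w^2+i\gamma\in\sigma_d(L_{\gamma,R})$.
   Context: For $\gamma,R>0$, $L_{\gamma,R}=-\frac{d^2}{dx^2}+i\gamma\chi_{[0,R]}$ on $L^2(\mathbb{R}_+)$ with Dirichlet boundary condition at $0$; $\sigma_d$ denotes the set of eigenvalues of finite algebraic multiplicity in $\mathbb{C}\setminus\mathbb{R}_+$. $\arg_-(\zeta)\in[-\pi,\pi)$ and $\mathrm{sq}_-(\zeta)=\sqrt{|\zeta|}e^{\frac i2\arg_-(\zeta)}$ (branch cut along $\mathbb{R}_-$). *)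

theory Defs
  imports "HOL-Analysis.Analysis"
begin

text \<open>Branch conventions of the paper: arg_m z \<in> [-pi, pi), sq_m z = sqrt|z| e^{i arg_m z / 2}.\<close>

definition arg_m :: "complex \<Rightarrow> real" where
  "arg_m z = (if Arg z = pi then - pi else Arg z)"

definition sq_m :: "complex \<Rightarrow> complex" where
  "sq_m z = complex_of_real (sqrt (cmod z)) * exp (\<i> * complex_of_real (arg_m z / 2))"

definition quot_AB :: "real \<Rightarrow> complex \<Rightarrow> complex" where
  "quot_AB \<gamma> w = (sq_m (w\<^sup>2 + \<i> * complex_of_real \<gamma>) - w) / (sq_m (w\<^sup>2 + \<i> * complex_of_real \<gamma>) + w)"

definition A_fun :: "real \<Rightarrow> complex \<Rightarrow> real" where
  "A_fun \<gamma> w = ln (cmod (quot_AB \<gamma> w))"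

definition B_fun :: "real \<Rightarrow> nat \<Rightarrow> complex \<Rightarrow> real" where
  "B_fun \<gamma> j w = arg_m (quot_AB \<gamma> w) + 2 * pi * real j"

definition G_fun :: "real \<Rightarrow> nat \<Rightarrow> real \<Rightarrow> complex \<Rightarrow> complex" where
  "G_fun \<gamma> j R w = (- complex_of_real (B_fun \<gamma> j w) + \<i> * complex_of_real (A_fun \<gamma> w)) / (2 * complex_of_real R)"

definition sq_int :: "(real \<Rightarrow> complex) \<Rightarrow> bool" where
  "sq_int f \<longleftrightarrow> (\<lambda>x. (cmod (f x))\<^sup>2) integrable_on {0..}"

text \<open>Operator domain H^2 \<inter> H^1_0 of L_{gamma,R} (functions normalised to vanish on the negative
  half-line, so that a.e.-classes of continuous representatives are unique); u' and u'' are
  the first and second derivatives. Since the potential jumps only at R, u'' is only required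
  to exist away from R.\<close>
definition in_dom :: "real \<Rightarrow> (real \<Rightarrow> complex) \<Rightarrow> (real \<Rightarrow> complex) \<Rightarrow> (real \<Rightarrow> complex) \<Rightarrow> bool" where
  "in_dom R u u' u'' \<longleftrightarrow>
     (\<forall>x<0. u x = 0) \<and> u 0 = 0 \<and>
     (\<forall>x\<ge>0. (u has_vector_derivative u' x) (at x within {0..})) \<and>
     continuous_on {0..} u' \<and>
     (\<forall>x>0. x \<noteq> R \<longrightarrow> (u' has_vector_derivative u'' x) (at x)) \<and>
     sq_int u \<and> sq_int u' \<and> sq_int u''"

text \<open>gen_ker gamma R lam k = ker (L_{gamma,R} - lam)^k.\<close>
primrec gen_ker :: "real \<Rightarrow> real \<Rightarrow> complex \<Rightarrow> nat \<Rightarrow> (real \<Rightarrow> complex) set" where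
  "gen_ker \<gamma> R lam 0 = {\<lambda>x. 0}"
| "gen_ker \<gamma> R lam (Suc k) = {u. \<exists>u' u''. in_dom R u u' u'' \<and>
      (\<exists>v\<in>gen_ker \<gamma> R lam k. \<forall>x>0. x \<noteq> R \<longrightarrow>
         - u'' x + (\<i> * complex_of_real \<gamma> * complex_of_real (indicator {0..R} x) - lam) * u x = v x)}"

definition is_eigenvalue :: "real \<Rightarrow> real \<Rightarrow> complex \<Rightarrow> bool" where
  "is_eigenvalue \<gamma> R lam \<longleftrightarrow> (\<exists>u\<in>gen_ker \<gamma> R lam 1. u \<noteq> (\<lambda>x. 0))"

definition finite_alg_mult :: "real \<Rightarrow> real \<Rightarrow> complex \<Rightarrow> bool" where
  "finite_alg_mult \<gamma> R lam \<longleftrightarrow> (\<exists>B. finite B \<and>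
     (\<forall>u\<in>(\<Union>k. gen_ker \<gamma> R lam k). \<exists>c. \<forall>x. u x = (\<Sum>b\<in>B. c b * b x)))"

definition sigma_d :: "real \<Rightarrow> real \<Rightarrow> complex set" where
  "sigma_d \<gamma> R = {lam. \<not> (Im lam = 0 \<and> Re lam \<ge> 0) \<and> is_eigenvalue \<gamma> R lam \<and> finite_alg_mult \<gamma> R lam}"

end

theory Submission imports Defs "HOL-Real_Asymp.Real_Asymp" begin

lemma vd_glue:
  fixes f :: "real \<Rightarrow> complex"
  assumes "(f has_vector_derivative D) (at x within {..x})"
      and "(f has_vector_derivative D) (at x within {x..})"
  shows "(f has_vector_derivative D) (at x)"
proof -
  have U: "UNIV = {..x} \<union> {x..}" by auto
  show ?thesis using assms unfolding has_vector_derivative_def has_derivative_within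
    by (subst U, auto simp: Lim_within_Un)
qed

lemma sin_nonzero:
  fixes w :: complex and x :: real
  assumes "Im w > 0" "x > 0"
  shows "sin (w * of_real x) \<noteq> 0"
proof
  assume "sin (w * of_real x) = 0"
  then obtain n :: int where "w * of_real x = of_real (n * pi)" by (auto simp: sin_eq_0)
  then have "Im (w * of_real x) = 0" by (metis Im_complex_of_real)
  with assms show False by simp
qed

lemma exp_tend: "(b::real) > 0 \<Longrightarrow> ((\<lambda>X. exp (- b * (X - R))) \<longlongrightarrow> 0) at_top"
  by real_asymp

lemma not_sq_int:
  fixes u u' :: "real \<Rightarrow> complex"
  assumes "sq_int u" "sq_int u'" "X1 \<ge> 0" "\<delta> > 0"
    and big: "\<And>X. X \<ge> X1 \<Longrightarrow> (cmod (u X))\<^sup>2 + (cmod (u' X))\<^sup>2 \<ge> \<delta>"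
  shows False
proof -
  let ?g = "\<lambda>x. (cmod (u x))\<^sup>2 + (cmod (u' x))\<^sup>2"
  have gi: "?g integrable_on {0..}" using assms(1,2) unfolding sq_int_def by (rule integrable_add)
  obtain n :: nat where n: "real n * \<delta> > integral {0..} ?g"
    using reals_Archimedean3[OF assms(4)] by blast
  have gi2: "?g integrable_on {X1..X1 + real n}"
    by (rule integrable_on_subinterval[OF gi]) (use assms(3) in auto)
  have "real n * \<delta> = integral {X1..X1 + real n} (\<lambda>x. \<delta>)" by simp
  also have "\<dots> \<le> integral {X1..X1 + real n} ?g"
    by (rule integral_le) (use gi2 big in auto)
  also have "\<dots> \<le> integral {0..} ?g"
    by (rule integral_subset_le[OF _ gi2 gi]) (use assms(3) in auto)
  finally show False using n by simp
qed

lemma cs_ineq: "(p + k * q)\<^sup>2 \<le> (1 + k\<^sup>2) * (p\<^sup>2 + q\<^sup>2)" for p k q :: real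
proof -
  have "0 \<le> (k * p - q)\<^sup>2" by simp
  then show ?thesis by (simp add: power2_eq_square algebra_simps)
qed

locale eig =
  fixes \<gamma> R :: real and w K :: complex
  assumes gpos: "\<gamma> > 0" and Rpos: "R > 0" and Imw: "Im w > 0" and ImK: "Im K > 0"
    and Ksq: "K\<^sup>2 = w\<^sup>2 + \<i> * complex_of_real \<gamma>"
    and match: "w * cos (w * of_real R) = \<i> * K * sin (w * of_real R)"
begin

definition "lam = w\<^sup>2 + \<i> * complex_of_real \<gamma>"
definition "s = sin (w * of_real R)"

definition u1 :: "real \<Rightarrow> complex" where
  "u1 x = (if x < 0 then 0 else if x \<le> R then sin (w * of_real x) else s * exp (\<i> * K * of_real (x - R)))"
definition u1d :: "real \<Rightarrow> complex" where
  "u1d x = (if x \<le> R then w * cos (w * of_real x) else \<i> * K * s * exp (\<i> * K * of_real (x - R)))"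
definition u1dd :: "real \<Rightarrow> complex" where
  "u1dd x = (\<i> * complex_of_real \<gamma> * complex_of_real (indicator {0..R} x) - lam) * u1 x"

lemma w_nz: "w \<noteq> 0" using Imw by auto
lemma K_nz: "K \<noteq> 0" using ImK by auto
lemma s_nz: "s \<noteq> 0" unfolding s_def using sin_nonzero[OF Imw Rpos] .

lemma u1_nz: "x > 0 \<Longrightarrow> u1 x \<noteq> 0"
  using sin_nonzero[OF Imw, of x] s_nz by (auto simp: u1_def)

lemma d_sin: "((\<lambda>x. sin (w * of_real x)) has_vector_derivative (w * cos (w * of_real x))) (at x within S)"
  by (rule has_vector_derivative_real_field[where f="\<lambda>z. sin (w * z)"]) (auto intro!: derivative_eq_intros)
lemma d_cos: "((\<lambda>x. w * cos (w * of_real x)) has_vector_derivative (- w\<^sup>2 * sin (w * of_real x))) (at x within S)"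
  by (rule has_vector_derivative_real_field[where f="\<lambda>z. w * cos (w * z)"]) (auto intro!: derivative_eq_intros simp: power2_eq_square)
lemma d_exp: "((\<lambda>x. c * exp (\<i> * K * of_real (x - R))) has_vector_derivative (\<i> * K * c * exp (\<i> * K * of_real (x - R)))) (at x within S)"
proof -
  have "((\<lambda>z. c * exp (\<i> * K * (z - of_real R))) has_field_derivative (\<i> * K * c * exp (\<i> * K * (of_real x - of_real R)))) (at (of_real x))"
    by (auto intro!: derivative_eq_intros)
  from has_vector_derivative_real_field[OF this] show ?thesis by simp
qed

lemma u1_R: "u1 R = s" using Rpos by (simp add: u1_def s_def)

lemma u1_der: "x \<ge> 0 \<Longrightarrow> (u1 has_vector_derivative u1d x) (at x within {0..})"
proof -
  assume x: "x \<ge> 0"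
  consider "x < R" | "x = R" | "x > R" by linarith
  then show ?thesis
  proof cases
    case 1
    have "((\<lambda>x. sin (w * of_real x)) has_vector_derivative (w * cos (w * of_real x))) (at x within {0..})" by (rule d_sin)
    then have "(u1 has_vector_derivative (w * cos (w * of_real x))) (at x within {0..})"
      by (rule has_vector_derivative_transform_within[where d="R - x"]) (use 1 x in \<open>auto simp: u1_def dist_real_def\<close>)
    then show ?thesis using 1 by (simp add: u1d_def)
  next
    case 3
    have "(u1 has_vector_derivative (\<i> * K * s * exp (\<i> * K * of_real (x - R)))) (at x within {0..})"
      by (rule has_vector_derivative_transform_within[OF d_exp[of s], where d="x - R"]) (use 3 x in \<open>auto simp: u1_def dist_real_def\<close>)
    then show ?thesis using 3 by (simp add: u1d_def)
  next
    case 2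
    have a: "(u1 has_vector_derivative (w * cos (w * of_real R))) (at R within {..R})"
      by (rule has_vector_derivative_transform_within[OF d_sin, where d="R"]) (use Rpos in \<open>auto simp: u1_def dist_real_def\<close>)
    have b: "(u1 has_vector_derivative (\<i> * K * s * exp (\<i> * K * of_real (R - R)))) (at R within {R..})"
      by (rule has_vector_derivative_transform_within[OF d_exp[of s], where d="1"]) (use Rpos in \<open>auto simp: u1_def s_def dist_real_def\<close>)
    have "(u1 has_vector_derivative (w * cos (w * of_real R))) (at R)"
      by (rule vd_glue[OF a]) (use b match in \<open>simp add: s_def\<close>)
    then show ?thesis using 2 by (simp add: u1d_def has_vector_derivative_at_within)
  qed
qed

lemma u1d_der: "x > 0 \<Longrightarrow> x \<noteq> R \<Longrightarrow> (u1d has_vector_derivative u1dd x) (at x)"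
proof -
  assume x: "x > 0" "x \<noteq> R"
  then consider "x < R" | "x > R" by linarith
  then show ?thesis
  proof cases
    case 1
    have "(u1d has_vector_derivative (- w\<^sup>2 * sin (w * of_real x))) (at x within UNIV)"
      by (rule has_vector_derivative_transform_within[OF d_cos, where d="R - x"])
         (use 1 x in \<open>auto simp: u1d_def dist_real_def\<close>)
    then show ?thesis using 1 x by (simp add: u1dd_def u1_def lam_def)
  next
    case 2
    have "(u1d has_vector_derivative (\<i> * K * (\<i> * K * s) * exp (\<i> * K * of_real (x - R)))) (at x within UNIV)"
      by (rule has_vector_derivative_transform_within[OF d_exp[of "\<i> * K * s"], where d="x - R"])
         (use 2 x in \<open>auto simp: u1d_def dist_real_def\<close>)
    moreover have "\<i> * K * (\<i> * K * s) * exp (\<i> * K * of_real (x - R)) = u1dd x"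
    proof -
      have "\<i> * K * (\<i> * K * s) = - K\<^sup>2 * s" by (simp add: power2_eq_square algebra_simps)
      then show ?thesis using 2 x by (simp add: u1dd_def u1_def lam_def Ksq[symmetric])
    qed
    ultimately show ?thesis by simp
  qed
qed

lemma u1d_cont: "continuous_on {0..} u1d"
proof -
  have "continuous_on ({..R} \<union> {R..}) u1d"
  proof (rule continuous_on_closed_Un)
    show "continuous_on {..R} u1d"
      by (rule continuous_on_cong[THEN iffD1, OF refl _ continuous_on_subset[of UNIV "\<lambda>x. w * cos (w * of_real x)"]])
         (auto simp: u1d_def intro!: continuous_intros)
    show "continuous_on {R..} u1d"
      by (rule continuous_on_cong[THEN iffD1, OF refl _ continuous_on_subset[of UNIV "\<lambda>x. \<i> * K * s * exp (\<i> * K * of_real (x - R))"]])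
         (auto simp: u1d_def match s_def intro!: continuous_intros)
  qed auto
  then show ?thesis by (rule continuous_on_subset) auto
qed

lemma norm_exp_sq: "(cmod (c * exp (\<i> * K * of_real (x - R))))\<^sup>2 = (cmod c)\<^sup>2 * exp (2 * Im K * R) * exp (- (2 * Im K) * x)"
proof -
  have "cmod (exp (\<i> * K * of_real (x - R))) = exp (- Im K * (x - R))"
    by (simp add: norm_exp_eq_Re)
  then have "(cmod (c * exp (\<i> * K * of_real (x - R))))\<^sup>2 = (cmod c)\<^sup>2 * (exp (- Im K * (x - R)))\<^sup>2"
    by (simp add: norm_mult power_mult_distrib)
  also have "(exp (- Im K * (x - R)))\<^sup>2 = exp (2 * Im K * R) * exp (- (2 * Im K) * x)"
    by (simp add: power2_eq_square exp_add[symmetric] algebra_simps)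
  finally show ?thesis by simp
qed

lemma sq_int_piece:
  assumes "continuous_on {0..R} h" "\<And>x. 0 \<le> x \<Longrightarrow> x < R \<Longrightarrow> g x = h x"
    "\<And>x. x > R \<Longrightarrow> g x = c * exp (\<i> * K * of_real (x - R))"
  shows "sq_int g"
proof -
  have i1: "(\<lambda>x. (cmod (h x))\<^sup>2) integrable_on {0..R}"
    by (rule integrable_continuous_interval) (auto intro!: continuous_intros assms(1))
  have i1': "(\<lambda>x. (cmod (g x))\<^sup>2) integrable_on {0..R}"
    by (rule integrable_spike[OF i1, of "{R}"]) (auto simp: assms(2))
  have "(\<lambda>x. exp (- (2 * Im K) * x)) integrable_on {R..}"
    by (rule integrable_on_exp_minus_to_infinity) (use ImK in simp)
  then have "(\<lambda>x. (cmod c)\<^sup>2 * exp (2 * Im K * R) * exp (- (2 * Im K) * x)) integrable_on {R..}"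
    by (rule integrable_on_mult_right)
  then have i2: "(\<lambda>x. (cmod (g x))\<^sup>2) integrable_on {R..}"
    by (rule integrable_spike[of _ _ "{R}"]) (auto simp: assms(3) norm_exp_sq simp del: of_real_diff)
  have "(\<lambda>x. (cmod (g x))\<^sup>2) integrable_on ({0..R} \<union> {R..})"
    by (rule integrable_Un[OF _ i1' i2]) (use Rpos in auto)
  moreover have "{0..R} \<union> {R..} = {0::real..}" using Rpos by auto
  ultimately show ?thesis unfolding sq_int_def by simp
qed

lemma u1_sq: "sq_int u1"
  by (rule sq_int_piece[where h="\<lambda>x. sin (w * of_real x)" and c=s]) (use Rpos in \<open>auto simp: u1_def intro!: continuous_intros\<close>)
lemma u1d_sq: "sq_int u1d"
  by (rule sq_int_piece[where h="\<lambda>x. w * cos (w * of_real x)" and c="\<i> * K * s"]) (auto simp: u1d_def intro!: continuous_intros)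
lemma u1dd_sq: "sq_int u1dd"
  by (rule sq_int_piece[where h="\<lambda>x. (\<i> * complex_of_real \<gamma> - lam) * sin (w * of_real x)" and c="- lam * s"])
     (use Rpos in \<open>auto simp: u1dd_def u1_def intro!: continuous_intros\<close>)

lemma u1_dom: "in_dom R u1 u1d u1dd"
  unfolding in_dom_def using u1_der u1d_der u1d_cont u1_sq u1d_sq u1dd_sq Rpos by (auto simp: u1_def)

lemma u1_eq: "x > 0 \<Longrightarrow> x \<noteq> R \<Longrightarrow> - u1dd x + (\<i> * complex_of_real \<gamma> * complex_of_real (indicator {0..R} x) - lam) * u1 x = 0"
  by (simp add: u1dd_def)

definition "F0 = of_real R / 2 - sin (2 * w * of_real R) / (4 * w)"
definition F :: "real \<Rightarrow> complex" where
  "F x = (if x \<le> R then of_real x / 2 - sin (2 * w * of_real x) / (4 * w)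
          else F0 + s\<^sup>2 * (exp (2 * \<i> * K * of_real (x - R)) - 1) / (2 * \<i> * K))"

lemma dF1: "((\<lambda>x. of_real x / 2 - sin (2 * w * of_real x) / (4 * w)) has_vector_derivative (sin (w * of_real x))\<^sup>2) (at x within S)"
proof -
  have "((\<lambda>z. z / 2 - sin (2 * w * z) / (4 * w)) has_field_derivative (1/2 - 2 * w * cos (2 * w * of_real x) / (4 * w))) (at (of_real x))"
    by (auto intro!: derivative_eq_intros)
  moreover have "1/2 - 2 * w * cos (2 * w * of_real x) / (4 * w) = (sin (w * of_real x))\<^sup>2"
    using cos_double_sin[of "w * of_real x"] w_nz by (simp add: field_simps)
  ultimately show ?thesis using has_vector_derivative_real_field by fastforce
qed

lemma dF2: "((\<lambda>x. F0 + s\<^sup>2 * (exp (2 * \<i> * K * of_real (x - R)) - 1) / (2 * \<i> * K)) has_vector_derivative (s * exp (\<i> * K * of_real (x - R)))\<^sup>2) (at x within S)"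
proof -
  have "((\<lambda>z. F0 + s\<^sup>2 * (exp (2 * \<i> * K * (z - of_real R)) - 1) / (2 * \<i> * K)) has_field_derivative (s\<^sup>2 * (exp (2 * \<i> * K * (of_real x - of_real R)) * (2 * \<i> * K)) / (2 * \<i> * K))) (at (of_real x))"
    by (auto intro!: derivative_eq_intros)
  moreover have "s\<^sup>2 * (exp (2 * \<i> * K * (of_real x - of_real R)) * (2 * \<i> * K)) / (2 * \<i> * K) = (s * exp (\<i> * K * of_real (x - R)))\<^sup>2"
    using K_nz exp_double[of "\<i> * K * of_real (x - R)"] by (simp add: power_mult_distrib algebra_simps)
  ultimately show ?thesis using has_vector_derivative_real_field by fastforce
qed

lemma F_der: "x \<ge> 0 \<Longrightarrow> (F has_vector_derivative (u1 x)\<^sup>2) (at x within {0..})"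
proof -
  assume x: "x \<ge> 0"
  consider "x < R" | "x = R" | "x > R" by linarith
  then show ?thesis
  proof cases
    case 1
    have "(F has_vector_derivative (sin (w * of_real x))\<^sup>2) (at x within {0..})"
      by (rule has_vector_derivative_transform_within[OF dF1, where d="R - x"]) (use 1 x in \<open>auto simp: F_def dist_real_def\<close>)
    then show ?thesis using 1 x by (simp add: u1_def)
  next
    case 3
    have "(F has_vector_derivative (s * exp (\<i> * K * of_real (x - R)))\<^sup>2) (at x within {0..})"
      by (rule has_vector_derivative_transform_within[OF dF2, where d="x - R"]) (use 3 x in \<open>auto simp: F_def dist_real_def\<close>)
    then show ?thesis using 3 Rpos by (simp add: u1_def)
  next
    case 2
    have a: "(F has_vector_derivative (sin (w * of_real R))\<^sup>2) (at R within {..R})"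
      by (rule has_vector_derivative_transform_within[OF dF1, where d="1"]) (auto simp: F_def dist_real_def)
    have b: "(F has_vector_derivative (s * exp (\<i> * K * of_real (R - R)))\<^sup>2) (at R within {R..})"
      by (rule has_vector_derivative_transform_within[OF dF2, where d="1"]) (auto simp: F_def F0_def dist_real_def)
    have "(F has_vector_derivative (sin (w * of_real R))\<^sup>2) (at R)"
      by (rule vd_glue[OF a]) (use b in \<open>simp add: s_def\<close>)
    then show ?thesis using 2 Rpos by (simp add: u1_def has_vector_derivative_at_within)
  qed
qed

lemma F_0: "F 0 = 0" using Rpos by (simp add: F_def)

lemma cont_of_der:
  assumes "\<And>x. x \<ge> 0 \<Longrightarrow> (f has_vector_derivative f' x) (at x within {0..})"
  shows "continuous_on {0..} f"
  unfolding continuous_on_eq_continuous_within using assms has_vector_derivative_continuous by blast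

lemma der_at: "x > 0 \<Longrightarrow> (f has_vector_derivative D) (at x within {0..}) \<Longrightarrow> (f has_vector_derivative D) (at x)"
  by (subst (asm) at_within_interior) auto

lemma wronski:
  assumes dom: "in_dom R u u' u''"
    and eq: "\<And>x. x > 0 \<Longrightarrow> x \<noteq> R \<Longrightarrow> - u'' x + (\<i> * complex_of_real \<gamma> * complex_of_real (indicator {0..R} x) - lam) * u x = a * u1 x"
    and X: "X \<ge> 0"
  shows "u' X * u1 X - u X * u1d X + a * F X = 0"
proof -
  let ?P = "\<lambda>x. u' x * u1 x - u x * u1d x + a * F x"
  have ud: "\<And>x. x \<ge> 0 \<Longrightarrow> (u has_vector_derivative u' x) (at x within {0..})"
    and u'c: "continuous_on {0..} u'"
    and u''d: "\<And>x. x > 0 \<Longrightarrow> x \<noteq> R \<Longrightarrow> (u' has_vector_derivative u'' x) (at x)"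
    and u0: "u 0 = 0"
    using dom unfolding in_dom_def by auto
  have cont: "continuous_on {0..X} ?P"
  proof -
    have "continuous_on {0..} ?P"
      by (intro continuous_intros u'c cont_of_der[OF ud] cont_of_der[OF u1_der] cont_of_der[OF F_der] u1d_cont)
    then show ?thesis by (rule continuous_on_subset) auto
  qed
  have der: "(?P has_derivative (\<lambda>h. 0)) (at x within {0..X})" if x: "x \<in> {0..X} - {0, R, X}" for x
  proof -
    from x have x0: "x > 0" "x \<noteq> R" by auto
    have "(?P has_vector_derivative (u' x * u1d x + u'' x * u1 x - (u x * u1dd x + u' x * u1d x) + a * (u1 x)\<^sup>2)) (at x)"
    proof -
      have d1: "(u has_vector_derivative u' x) (at x)" using der_at[OF x0(1) ud] x0 by auto
      have d2: "(u1 has_vector_derivative u1d x) (at x)" using der_at[OF x0(1) u1_der] x0 by auto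
      have d3: "(F has_vector_derivative (u1 x)\<^sup>2) (at x)" using der_at[OF x0(1) F_der] x0 by auto
      have d4: "(u1d has_vector_derivative u1dd x) (at x)" using u1d_der x0 by auto
      have d5: "(u' has_vector_derivative u'' x) (at x)" using u''d x0 by auto
      have d6: "((\<lambda>x. a * F x) has_vector_derivative a * (u1 x)\<^sup>2) (at x)"
        using has_vector_derivative_mult[OF has_vector_derivative_const[of a] d3] by simp
      show ?thesis
        by (intro has_vector_derivative_add has_vector_derivative_diff has_vector_derivative_mult d1 d2 d4 d5 d6)
    qed
    moreover have "u' x * u1d x + u'' x * u1 x - (u x * u1dd x + u' x * u1d x) + a * (u1 x)\<^sup>2 = 0"
    proof -
      have "u'' x = (\<i> * complex_of_real \<gamma> * complex_of_real (indicator {0..R} x) - lam) * u x - a * u1 x"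
        using eq[OF x0] by (simp add: algebra_simps)
      then show ?thesis unfolding u1dd_def by (simp only:) (simp add: power2_eq_square algebra_simps)
    qed
    ultimately have "(?P has_vector_derivative 0) (at x within {0..X})"
      by (simp add: has_vector_derivative_at_within)
    then show ?thesis by (simp add: has_vector_derivative_def)
  qed
  have "?P X = ?P 0"
    by (rule has_derivative_zero_unique_strong_interval[of "{0, R, X}" 0 X ?P]) (use cont der X in auto)
  also have "?P 0 = 0" using u0 F_0 Rpos by (simp add: u1_def)
  finally show ?thesis .
qed

definition "S = F0 - s\<^sup>2 / (2 * \<i> * K)"

lemma S_nz: "S \<noteq> 0"
proof
  assume "S = 0"
  then have h: "of_real R / 2 - sin (2 * w * of_real R) / (4 * w) = s\<^sup>2 / (2 * \<i> * K)"
    by (simp add: S_def F0_def)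
  let ?c = "cos (w * of_real R)"
  have sd: "sin (2 * w * of_real R) = 2 * s * ?c" using sin_double[of "w * of_real R"] by (simp add: s_def mult.assoc)
  have "2 * (\<i> * K * w * of_real R - \<i> * K * s * ?c - s\<^sup>2 * w) = 0"
    using h w_nz K_nz unfolding sd by (simp add: field_simps power2_eq_square)
  then have "\<i> * K * w * of_real R - \<i> * K * s * ?c - s\<^sup>2 * w = 0" by (simp only: mult_eq_0_iff) simp
  moreover have "\<i> * K * s = w * ?c" using match by (simp add: s_def)
  ultimately have "\<i> * K * w * of_real R - w * (s\<^sup>2 + ?c\<^sup>2) = 0"
    by (simp add: power2_eq_square algebra_simps)
  then have "\<i> * K * w * of_real R = w" by (simp add: s_def)
  then have "\<i> * K * of_real R = 1" using w_nz by (simp add: mult.commute mult.left_commute)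
  then have "Im (\<i> * K * of_real R) = 0" by simp
  then have "Re K * R = 0" by simp
  moreover have "Re (\<i> * K * of_real R) = 1" using \<open>\<i> * K * of_real R = 1\<close> by simp
  then have "- Im K * R = 1" by simp
  moreover have "Im K * R > 0" using ImK Rpos by simp
  ultimately show False by linarith
qed

lemma F_far: "X > R \<Longrightarrow> F X = S + s\<^sup>2 * (exp (\<i> * K * of_real (X - R)))\<^sup>2 / (2 * \<i> * K)"
  using K_nz exp_double[of "\<i> * K * of_real (X - R)"]
  by (simp add: F_def S_def diff_divide_distrib add_divide_distrib algebra_simps)

lemma a_zero:
  assumes dom: "in_dom R u u' u''"
    and eq: "\<And>x. x > 0 \<Longrightarrow> x \<noteq> R \<Longrightarrow> - u'' x + (\<i> * complex_of_real \<gamma> * complex_of_real (indicator {0..R} x) - lam) * u x = a * u1 x"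
  shows "a = 0"
proof (rule ccontr)
  assume a: "a \<noteq> 0"
  define M where "M = cmod s + cmod a * (cmod s)\<^sup>2 / (2 * cmod K)"
  have Mpos: "M > 0" unfolding M_def using s_nz K_nz by (simp add: add_pos_nonneg)
  define \<epsilon> where "\<epsilon> = min 1 (cmod a * cmod S / M)"
  have epos: "\<epsilon> > 0" unfolding \<epsilon>_def using a S_nz Mpos by simp
  have "eventually (\<lambda>X. exp (- Im K * (X - R)) < \<epsilon>) at_top"
    using order_tendstoD(2)[OF exp_tend[OF ImK] epos] .
  moreover have "eventually (\<lambda>X. X > max R 0) at_top" by (rule eventually_gt_at_top)
  ultimately have "eventually (\<lambda>X. exp (- Im K * (X - R)) < \<epsilon> \<and> X > max R 0) at_top"
    by eventually_elim auto
  then obtain X1 where X1: "\<And>X. X \<ge> X1 \<Longrightarrow> exp (- Im K * (X - R)) < \<epsilon> \<and> X > max R 0"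
    unfolding eventually_at_top_linorder by blast
  have big: "1 < cmod (u' X) + cmod K * cmod (u X)" if X: "X \<ge> X1" for X
  proof (rule ccontr)
    assume sm: "\<not> 1 < cmod (u' X) + cmod K * cmod (u X)"
    from X1[OF X] have XR: "X > R" "X > 0" and ee: "exp (- Im K * (X - R)) < \<epsilon>" by auto
    define e where "e = exp (\<i> * K * of_real (X - R))"
    have ne: "cmod e = exp (- Im K * (X - R))" unfolding e_def by (simp add: norm_exp_eq_Re)
    have ne1: "cmod e < 1" "cmod e < cmod a * cmod S / M" using ee ne unfolding \<epsilon>_def by auto
    have W: "u' X * u1 X - u X * u1d X + a * F X = 0"
      by (rule wronski[OF dom eq]) (use XR in auto)
    then have "a * S = - (s * e * (u' X - \<i> * K * u X)) - a * s\<^sup>2 * e\<^sup>2 / (2 * \<i> * K)"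
      using XR by (simp add: F_far u1_def u1d_def e_def algebra_simps add_divide_distrib diff_divide_distrib)
    then have "cmod (a * S) \<le> cmod (s * e * (u' X - \<i> * K * u X)) + cmod (a * s\<^sup>2 * e\<^sup>2 / (2 * \<i> * K))"
      by (metis norm_diff_ineq norm_minus_cancel norm_triangle_ineq4 diff_minus_eq_add)
    also have "cmod (s * e * (u' X - \<i> * K * u X)) \<le> cmod s * cmod e * 1"
    proof -
      have "cmod (u' X - \<i> * K * u X) \<le> cmod (u' X) + cmod K * cmod (u X)"
        by (metis norm_triangle_ineq4 norm_mult norm_ii mult_1 mult.assoc)
      then have "cmod (u' X - \<i> * K * u X) \<le> 1" using sm by simp
      then show ?thesis using mult_left_mono[of _ 1 "cmod s * cmod e"] by (simp add: norm_mult)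
    qed
    also have "cmod (a * s\<^sup>2 * e\<^sup>2 / (2 * \<i> * K)) \<le> cmod e * (cmod a * (cmod s)\<^sup>2 / (2 * cmod K))"
    proof -
      have "cmod (a * s\<^sup>2 * e\<^sup>2 / (2 * \<i> * K)) = cmod a * (cmod s)\<^sup>2 * (cmod e)\<^sup>2 / (2 * cmod K)"
        by (simp add: norm_mult norm_divide norm_power)
      also have "\<dots> \<le> cmod a * (cmod s)\<^sup>2 * cmod e / (2 * cmod K)"
        proof -
        have "(cmod e)\<^sup>2 \<le> cmod e" using ne1(1) mult_right_le_one_le[of "cmod e" "cmod e"] by (simp add: power2_eq_square)
        then show ?thesis by (intro divide_right_mono mult_left_mono) auto
      qed
      finally show ?thesis by (simp add: mult.commute mult.left_commute)
    qed
    finally have "cmod a * cmod S \<le> cmod e * M" by (simp add: M_def norm_mult algebra_simps)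
    also have "\<dots> < cmod a * cmod S" using ne1(2) Mpos by (simp add: pos_less_divide_eq)
    finally show False by simp
  qed
  have "1 / (1 + (cmod K)\<^sup>2) \<le> (cmod (u X))\<^sup>2 + (cmod (u' X))\<^sup>2" if X: "X \<ge> X1" for X
  proof -
    have "1 \<le> (cmod (u' X) + cmod K * cmod (u X))\<^sup>2" using big[OF X]
      by (smt (verit) one_le_power)
    also have "\<dots> \<le> (1 + (cmod K)\<^sup>2) * ((cmod (u' X))\<^sup>2 + (cmod (u X))\<^sup>2)" by (rule cs_ineq)
    finally show ?thesis by (simp add: divide_le_eq add_pos_nonneg algebra_simps add.commute)
  qed
  moreover have "X1 \<le> max X1 0" by simp
  ultimately show False
    using not_sq_int[of u u' "max X1 0" "1 / (1 + (cmod K)\<^sup>2)"] dom unfolding in_dom_def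
    by (simp add: add_pos_nonneg)
qed

lemma unique:
  assumes dom: "in_dom R u u' u''"
    and eq: "\<And>x. x > 0 \<Longrightarrow> x \<noteq> R \<Longrightarrow> - u'' x + (\<i> * complex_of_real \<gamma> * complex_of_real (indicator {0..R} x) - lam) * u x = 0"
  shows "\<exists>C. \<forall>x. u x = C * u1 x"
proof -
  have ud: "\<And>x. x \<ge> 0 \<Longrightarrow> (u has_vector_derivative u' x) (at x within {0..})"
    and uneg: "\<And>x. x < 0 \<Longrightarrow> u x = 0" and u0: "u 0 = 0"
    using dom unfolding in_dom_def by auto
  have W: "u' X * u1 X - u X * u1d X = 0" if "X \<ge> 0" for X
    using wronski[OF dom, of 0 X] eq that by simp
  let ?q = "\<lambda>x. u x * inverse (u1 x)"
  have qc: "continuous_on {0<..} ?q"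
  proof -
    have "continuous_on {0<..} u" by (rule continuous_on_subset[OF cont_of_der[OF ud]]) auto
    moreover have "continuous_on {0<..} u1" by (rule continuous_on_subset[OF cont_of_der[OF u1_der]]) auto
    ultimately show ?thesis using u1_nz by (auto intro!: continuous_intros)
  qed
  have qd: "(?q has_vector_derivative 0) (at x)" if x: "x > 0" "x \<noteq> R" for x
  proof -
    have d1: "(u has_vector_derivative u' x) (at x)" using der_at[OF x(1) ud] x by auto
    have d2: "(u1 has_vector_derivative u1d x) (at x)" using der_at[OF x(1) u1_der] x by auto
    have d3: "((inverse \<circ> u1) has_vector_derivative (u1d x * (- (inverse (u1 x) ^ 2)))) (at x)"
      using field_vector_diff_chain_at[OF d2 DERIV_inverse[OF u1_nz[OF x(1)]]] by (simp add: numeral_2_eq_2)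
    have "((\<lambda>x. u x * (inverse \<circ> u1) x) has_vector_derivative (u x * (u1d x * (- (inverse (u1 x) ^ 2))) + u' x * (inverse \<circ> u1) x)) (at x)"
      by (rule has_vector_derivative_mult[OF d1 d3])
    moreover have "u x * (u1d x * (- (inverse (u1 x) ^ 2))) + u' x * (inverse \<circ> u1) x = 0"
    proof -
      have "u x * (u1d x * (- (inverse (u1 x) ^ 2))) + u' x * (inverse \<circ> u1) x
          = (u' x * u1 x - u x * u1d x) * (inverse (u1 x))\<^sup>2"
        using u1_nz[OF x(1)] by (simp add: power2_eq_square field_simps)
      then show ?thesis using W[of x] x by simp
    qed
    ultimately show ?thesis by (simp add: o_def)
  qed
  define C where "C = ?q R"
  have qconst: "?q x = C" if x: "x > 0" for x
  proof -
    have cI: "continuous_on {min x R..max x R} ?q"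
      by (rule continuous_on_subset[OF qc]) (use x Rpos in auto)
    have dI: "(?q has_derivative (\<lambda>h. 0)) (at y within {min x R..max x R})" if y: "y \<in> {min x R..max x R} - {R}" for y
    proof -
      have "y > 0" "y \<noteq> R" using y x Rpos by auto
      from qd[OF this] show ?thesis
        by (simp add: has_vector_derivative_def has_derivative_at_withinI)
    qed
    show ?thesis
    proof (cases "x \<le> R")
      case True
      have "?q R = ?q x"
        by (rule has_derivative_zero_unique_strong_interval[of "{R}" x R ?q]) (use cI dI True in auto)
      then show ?thesis unfolding C_def by simp
    next
      case False
      have "?q x = ?q R"
        by (rule has_derivative_zero_unique_strong_interval[of "{R}" R x ?q]) (use cI dI False in auto)
      then show ?thesis unfolding C_def by simp
    qed
  qed
  have "u x = C * u1 x" for x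
  proof (cases "x > 0")
    case True
    then show ?thesis using qconst[OF True] u1_nz[OF True] by (auto simp: field_simps)
  next
    case False
    then show ?thesis using uneg u0 Rpos by (cases "x = 0") (auto simp: u1_def)
  qed
  then show ?thesis by blast
qed

lemma all_gen_ker: "u \<in> gen_ker \<gamma> R lam k \<Longrightarrow> \<exists>C. \<forall>x. u x = C * u1 x"
proof (induction k arbitrary: u)
  case 0
  then show ?case by (auto intro: exI[of _ 0])
next
  case (Suc k)
  then obtain u' u'' v where dom: "in_dom R u u' u''" and v: "v \<in> gen_ker \<gamma> R lam k"
    and eq: "\<And>x. x > 0 \<Longrightarrow> x \<noteq> R \<Longrightarrow> - u'' x + (\<i> * complex_of_real \<gamma> * complex_of_real (indicator {0..R} x) - lam) * u x = v x"
    by auto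
  from Suc.IH[OF v] obtain a where a: "\<And>x. v x = a * u1 x" by blast
  have "a = 0" by (rule a_zero[OF dom]) (use eq a in auto)
  then show ?case using unique[OF dom] eq a by simp
qed

lemma u1_in: "u1 \<in> gen_ker \<gamma> R lam 1"
proof -
  have "u1 \<in> gen_ker \<gamma> R lam (Suc 0)"
    unfolding gen_ker.simps mem_Collect_eq
    by (intro exI[of _ u1d] exI[of _ u1dd] conjI[OF u1_dom] bexI[of _ "\<lambda>x. 0"]) (use u1_eq in auto)
  then show ?thesis by simp
qed

lemma lam_in: "Im lam > 0 \<Longrightarrow> lam \<in> sigma_d \<gamma> R"
proof -
  have "u1 R \<noteq> 0" using u1_nz Rpos by auto
  then have ev: "is_eigenvalue \<gamma> R lam" unfolding is_eigenvalue_def using u1_in by (metis)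
  have fam: "finite_alg_mult \<gamma> R lam"
    unfolding finite_alg_mult_def
  proof (intro exI[of _ "{u1}"] conjI ballI)
    fix u assume "u \<in> (\<Union>k. gen_ker \<gamma> R lam k)"
    then obtain C where "\<forall>x. u x = C * u1 x" using all_gen_ker by blast
    then show "\<exists>c. \<forall>x. u x = (\<Sum>b\<in>{u1}. c b * b x)" by (intro exI[of _ "\<lambda>_. C"]) simp
  qed simp
  assume "Im lam > 0"
  then show ?thesis using ev fam unfolding sigma_d_def by simp
qed

end

theorem lemma2p2:
  fixes \<gamma> R :: real and j :: nat and w :: complex
  assumes "\<gamma> > 0" and "R > 0"
    and "Im w > 0"
    and "w = G_fun \<gamma> j R w"
    and "Im (w\<^sup>2 + \<i> * complex_of_real \<gamma>) > 0"
  shows "w\<^sup>2 + \<i> * complex_of_real \<gamma> \<in> sigma_d \<gamma> R"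
proof -
  define lam where "lam = w\<^sup>2 + \<i> * complex_of_real \<gamma>"
  define K where "K = sq_m lam"
  have Iml: "Im lam > 0" using assms(5) by (simp add: lam_def)
  then have lnz: "lam \<noteq> 0" by auto
  have Arg: "0 < Arg lam" "Arg lam < pi" using Iml Arg_lt_pi by auto
  have Kc: "K = of_real (sqrt (cmod lam)) * cis (Arg lam / 2)"
    using Arg by (simp add: K_def sq_m_def arg_m_def cis_conv_exp)
  have Ksq: "K\<^sup>2 = lam"
  proof -
    have "(complex_of_real (sqrt (cmod lam)))\<^sup>2 = of_real ((sqrt (cmod lam))\<^sup>2)" by (simp only: of_real_power)
    then have "K\<^sup>2 = of_real ((sqrt (cmod lam))\<^sup>2) * (cis (Arg lam / 2))\<^sup>2"
      unfolding Kc by (simp only: power_mult_distrib)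
    also have "(cis (Arg lam / 2))\<^sup>2 = cis (Arg lam)"
    proof -
      have "real 2 * (Arg lam / 2) = Arg lam" by simp
      show ?thesis unfolding power2_eq_square cis_mult by simp
    qed
    also have "of_real ((sqrt (cmod lam))\<^sup>2) * cis (Arg lam) = rcis (cmod lam) (Arg lam)"
      by (simp add: rcis_def)
    finally show ?thesis by (simp add: rcis_cmod_Arg flip: of_real_power)
  qed
  have ImK: "Im K > 0"
  proof -
    have "Im K = sqrt (cmod lam) * sin (Arg lam / 2)" unfolding Kc by simp
    moreover have "sin (Arg lam / 2) > 0" using Arg by (intro sin_gt_zero) auto
    ultimately show ?thesis using lnz by simp
  qed
  define q where "q = quot_AB \<gamma> w"
  have qdef: "q = (K - w) / (K + w)" unfolding q_def quot_AB_def K_def lam_def by simp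
  define A where "A = ln (cmod q)"
  define B where "B = arg_m q + 2 * pi * real j"
  have wG: "w = (- of_real B + \<i> * of_real A) / (2 * of_real R)"
    using assms(4) by (simp add: G_fun_def A_fun_def B_fun_def A_def B_def q_def)
  then have w2: "2 * of_real R * w = - of_real B + \<i> * of_real A" using assms(2) by (simp add: field_simps)
  have "Im (2 * of_real R * w) = A" using w2 by simp
  moreover have "2 * R * Im w > 0" using assms(2,3) by simp
  ultimately have "A > 0" by simp
  then have qn: "cmod q > 1"
    unfolding A_def by (cases "cmod q = 0") auto
  have qnz: "q \<noteq> 0" using qn by auto
  have qpol: "q = of_real (cmod q) * cis (arg_m q)"
  proof -
    have "cis (arg_m q) = cis (Arg q)"
      by (auto simp: arg_m_def complex_eq_iff)
    then show ?thesis using rcis_cmod_Arg[of q] by (simp add: rcis_def)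
  qed
  have E2q: "exp (\<i> * (2 * of_real R * w)) * q = 1"
  proof -
    have "\<i> * (2 * of_real R * w) = of_real (- A) + \<i> * of_real (- arg_m q) + \<i> * of_real (- 2 * pi * real j)"
      unfolding w2 B_def by (simp add: algebra_simps)
    then have "exp (\<i> * (2 * of_real R * w)) = exp (of_real (- A) + \<i> * of_real (- arg_m q) + \<i> * of_real (- 2 * pi * real j))"
      by (simp only:)
    also have "\<dots> = exp (of_real (- A)) * cis (- arg_m q) * cis (- 2 * pi * real j)"
      by (simp only: exp_add cis_conv_exp)
    also have "cis (- 2 * pi * real j) = 1"
    proof -
      have "cis (- 2 * pi * real j) = cis (2 * pi * (- real j))" by simp
      also have "\<dots> = 1" by (rule cis_multiple_2pi) simp
      finally show ?thesis .
    qed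
    also have "exp (of_real (- A)) = of_real (1 / cmod q)"
    proof -
      have "q \<noteq> 0" using qn by auto
      then have "exp (- A) = 1 / cmod q" by (simp add: A_def exp_minus inverse_eq_divide)
      then show ?thesis by (simp only: exp_of_real)
    qed
    finally have e: "exp (\<i> * (2 * of_real R * w)) = of_real (1 / cmod q) * cis (- arg_m q) * 1" .
    have "exp (\<i> * (2 * of_real R * w)) * q = exp (\<i> * (2 * of_real R * w)) * (of_real (cmod q) * cis (arg_m q))"
      using qpol by (rule arg_cong)
    also have "\<dots> = of_real (1 / cmod q) * cis (- arg_m q) * 1 * (of_real (cmod q) * cis (arg_m q))"
      by (simp only: e)
    also have "\<dots> = of_real (1 / cmod q * cmod q) * (cis (- arg_m q) * cis (arg_m q))"
      by (simp only: of_real_mult mult_1_right mult_1_left mult_ac)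
    also have "\<dots> = 1" using qnz by (simp add: cis_mult)
    finally show ?thesis .
  qed
  have Kw: "K + w \<noteq> 0" using qn qdef by auto
  define E where "E = exp (\<i> * w * of_real R)"
  have EE: "E\<^sup>2 = exp (\<i> * (2 * of_real R * w))"
    unfolding E_def by (simp add: exp_double[symmetric] algebra_simps)
  have key: "E\<^sup>2 * (K - w) = K + w" using E2q Kw unfolding EE qdef by (simp add: field_simps)
  have Enz: "E \<noteq> 0" by (simp add: E_def)
  have match: "w * cos (w * of_real R) = \<i> * K * sin (w * of_real R)"
  proof -
    have c: "cos (w * of_real R) = (E + inverse E) / 2"
      by (simp add: cos_exp_eq E_def exp_minus algebra_simps)
    have s: "sin (w * of_real R) = (E - inverse E) / (2 * \<i>)"
      by (simp add: sin_exp_eq E_def exp_minus algebra_simps)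
    have k0: "w * (E\<^sup>2 + 1) - K * (E\<^sup>2 - 1) = 0" using key by (simp add: algebra_simps)
    have "w * ((E + inverse E) / 2) - \<i> * K * ((E - inverse E) / (2 * \<i>)) = (w * (E\<^sup>2 + 1) - K * (E\<^sup>2 - 1)) / (2 * E)"
      using Enz by (simp add: field_simps power2_eq_square)
    then have "w * ((E + inverse E) / 2) - \<i> * K * ((E - inverse E) / (2 * \<i>)) = 0" using k0 by simp
    then show ?thesis unfolding c s by (rule iffD2[OF eq_iff_diff_eq_0])
  qed
  interpret eig \<gamma> R w K
    by unfold_locales (use assms ImK Ksq match in \<open>auto simp: lam_def\<close>)
  show ?thesis using lam_in assms(5) unfolding lam_def eig.lam_def by simp
qed
end
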